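(* Let $n\ge1$, $\mu>0$. Couple the type $B$ oriented swap process on $\pm[1,n]$ (finite TASEP) with the infinite colored half-space TASEP on $\pm\mathbb{N}$ by using the same clocks for all pairs of positions inside $\pm[1,n]$ (the pairs $(i,i+1)$, $1\le i\le n-1$, and $(-1,1)$). Let $\widehat h$ and $h$ be the respective height functions. Then almost surely, for all $\tau\ge0$ and all $i=0,1,\dots,n-1$, \[ \widehat h^{\ge i+1}(\tau,-i-1)=\min\big(h^{\ge i+1}(\tau,-i-1),\,n-i\big). \]
   Context: Infinite colored half-space TASEP with boundary rate $\mu$: positions $\pm\mathbb{N}$ ordered $\dots<-2<-1<1<2<\dots$; configuration $\eta:\pm\mathbb{N}\to\pm\mathbb{N}$ bijective with $\eta(-x)=-\eta(x)$, initially $\eta(x)=x$; each pair $(x,x+1)$, $x\ge1$, has a rate-$1$ clock, and $(-1,1)$ a rate-$\mu$ clock; at a ring, if $\eta(x)<\eta(x+1)$ (resp. $\eta(-1)<\eta(1)$) the two particles are swapped, and for $x\ge1$ also the particles at $-x,-x-1$; no other moves. The finite TASEP (type $B$ oriented swap process) is the same dynamics restricted to positions $\pm[1,n]$, with only the clocks on $(i,i+1)$, $1\le i\le n-1$, and $(-1,1)$. Height functions: $h^{\ge j}(\tau,x)$ (resp. $\widehat h^{\ge j}(\tau,x)$) is the number of particles of color $\ge j$ at positions $\le x$ at time $\tau$ in the infinite (resp. finite) system. *)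

theory Defs
  imports "HOL-Probability.Probability"
begin

text \<open>Positions and colours in the ordered set \<open>\<plusminus>\<nat>\<close> are represented by nonzero integers;
  the integer order restricted to nonzero integers is exactly the order
  \<open>\<dots> < -2 < -1 < 1 < 2 < \<dots>\<close>.  Configurations are functions \<open>int \<Rightarrow> int\<close>
  (the value at 0 is irrelevant).

  Bonds are indexed by naturals: bond 0 is the pair (-1,1) with rate \<open>\<mu>\<close>,
  bond b \<ge> 1 is the pair (b,b+1) (together with its mirror (-b-1,-b)) with rate 1.\<close>

definition bond_rate :: "real \<Rightarrow> nat \<Rightarrow> real" where
  "bond_rate \<mu> b = (if b = 0 then \<mu> else 1)"

text \<open>Clocks: \<open>\<omega> (b,k)\<close> is the k-th waiting time of the Poisson clock of bond b;
  all waiting times are independent exponentials with the bond's rate.\<close>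

definition clock_space :: "real \<Rightarrow> (nat \<times> nat \<Rightarrow> real) measure" where
  "clock_space \<mu> = PiM UNIV (\<lambda>bk. density lborel (exponential_density (bond_rate \<mu> (fst bk))))"

definition ring_time :: "(nat \<times> nat \<Rightarrow> real) \<Rightarrow> nat \<Rightarrow> nat \<Rightarrow> real" where
  "ring_time \<omega> b k = (\<Sum>j\<le>k. \<omega> (b, j))"

definition tswap :: "int \<Rightarrow> int \<Rightarrow> (int \<Rightarrow> int) \<Rightarrow> (int \<Rightarrow> int)" where
  "tswap a c \<eta> = (\<lambda>y. if y = a then \<eta> c else if y = c then \<eta> a else \<eta> y)"

definition bond_update :: "nat \<Rightarrow> (int \<Rightarrow> int) \<Rightarrow> (int \<Rightarrow> int)" where
  "bond_update b \<eta> =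
     (if b = 0 then (if \<eta> (-1) < \<eta> 1 then tswap (-1) 1 \<eta> else \<eta>)
      else (let x = int b in
            if \<eta> x < \<eta> (x + 1) then tswap (- x) (- x - 1) (tswap x (x + 1) \<eta>) else \<eta>))"

text \<open>Ring times of the bonds 0,...,m-1 up to time \<open>\<tau>\<close>, and the bonds ringing at a given time
  (simultaneous rings have probability zero; they are processed in increasing bond order).\<close>

definition ring_times :: "(nat \<times> nat \<Rightarrow> real) \<Rightarrow> nat \<Rightarrow> real \<Rightarrow> real set" where
  "ring_times \<omega> m \<tau> = {ring_time \<omega> b k | b k. b < m \<and> ring_time \<omega> b k \<le> \<tau>}"

definition bonds_ringing_at :: "(nat \<times> nat \<Rightarrow> real) \<Rightarrow> nat \<Rightarrow> real \<Rightarrow> nat list" where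
  "bonds_ringing_at \<omega> m t = sorted_list_of_set {b. b < m \<and> (\<exists>k. ring_time \<omega> b k = t)}"

text \<open>Finite TASEP (type B oriented swap process) on \<open>\<plusminus>[1,m]\<close>, driven by the clocks of
  bonds 0,...,m-1, started from the identity: rings are applied in chronological order.\<close>

definition finite_config :: "nat \<Rightarrow> (nat \<times> nat \<Rightarrow> real) \<Rightarrow> real \<Rightarrow> int \<Rightarrow> int" where
  "finite_config m \<omega> \<tau> =
     fold bond_update
       (concat (map (bonds_ringing_at \<omega> m) (sorted_list_of_set (ring_times \<omega> m \<tau>)))) id"

text \<open>Infinite half-space TASEP via the Harris graphical construction: if bond m \<ge> 1
  (the pair (m,m+1)) has not rung by time \<open>\<tau>\<close>, positions in \<open>\<plusminus>[1,m]\<close> evolve up to time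
  \<open>\<tau>\<close> only under the bonds 0,...,m-1.\<close>

definition infinite_config :: "(nat \<times> nat \<Rightarrow> real) \<Rightarrow> real \<Rightarrow> int \<Rightarrow> int" where
  "infinite_config \<omega> \<tau> x =
     finite_config (LEAST m. nat \<bar>x\<bar> \<le> m \<and> 1 \<le> m \<and> (\<forall>k. \<tau> < ring_time \<omega> m k)) \<omega> \<tau> x"

definition height_inf :: "(nat \<times> nat \<Rightarrow> real) \<Rightarrow> real \<Rightarrow> int \<Rightarrow> int \<Rightarrow> nat" where
  "height_inf \<omega> \<tau> j x = card {y::int. y \<noteq> 0 \<and> y \<le> x \<and> j \<le> infinite_config \<omega> \<tau> y}"

definition height_fin :: "nat \<Rightarrow> (nat \<times> nat \<Rightarrow> real) \<Rightarrow> real \<Rightarrow> int \<Rightarrow> int \<Rightarrow> nat" where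
  "height_fin n \<omega> \<tau> j x =
     card {y::int. y \<noteq> 0 \<and> - int n \<le> y \<and> y \<le> x \<and> j \<le> finite_config n \<omega> \<tau> y}"

end

theory Submission
  imports Defs
begin


definition sortE :: "int \<Rightarrow> int \<Rightarrow> (int \<Rightarrow> int) \<Rightarrow> (int \<Rightarrow> int)" where
  "sortE a c \<eta> = (if \<eta> a < \<eta> c then tswap a c \<eta> else \<eta>)"

definition antis :: "(int \<Rightarrow> int) \<Rightarrow> bool" where
  "antis \<eta> \<longleftrightarrow> (\<forall>y. \<eta> (- y) = - \<eta> y)"

definition win :: "nat \<Rightarrow> int \<Rightarrow> int set" where
  "win w x = {y. - int w \<le> y \<and> y \<le> int w \<and> y \<noteq> 0 \<and> x \<le> y}"

definition cnt :: "nat \<Rightarrow> int \<Rightarrow> (int \<Rightarrow> int) \<Rightarrow> int \<Rightarrow> nat" where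
  "cnt w t \<eta> x = (\<Sum>y\<in>win w x. if \<eta> y < t then 1 else 0)"

lemma finite_win[simp]: "finite (win w x)"
  unfolding win_def by (rule finite_subset[of _ "{- int w..int w}"]) auto

lemma antis_id: "antis id" by (simp add: antis_def)

lemma antisD: "antis \<eta> \<Longrightarrow> \<eta> (- x - 1) = - \<eta> (x + 1)" "antis \<eta> \<Longrightarrow> \<eta> (- x) = - \<eta> x"
  unfolding antis_def by (metis minus_add_distrib uminus_add_conv_diff diff_minus_eq_add add.commute)+

lemma antis_bond_update: assumes "antis \<eta>" shows "antis (bond_update b \<eta>)"
proof -
  have e: "\<And>x. \<eta> (- x) = - \<eta> x" using antisD(2)[OF assms] by auto
  show ?thesis unfolding antis_def
  proof
    fix y
    show "bond_update b \<eta> (- y) = - bond_update b \<eta> y"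
    proof (cases "b = 0")
      case True then show ?thesis by (auto simp: bond_update_def tswap_def e)
    next
      case False
      define x where "x = int b"
      have x: "x \<ge> 1" using False unfolding x_def by simp
      have u: "bond_update b \<eta> = (if \<eta> x < \<eta> (x + 1) then tswap (- x) (- x - 1) (tswap x (x + 1) \<eta>) else \<eta>)"
        using False unfolding bond_update_def x_def Let_def by simp
      have e1: "\<eta> (- x - 1) = - \<eta> (x + 1)" using e[of "x+1"] by simp
      have e2: "\<eta> (1 + x) = \<eta> (x + 1)" by (simp add: add.commute)
      have e3: "\<eta> (- 1 - x) = - \<eta> (x + 1)"
      proof -
        have "- 1 - x = - x - 1" by simp
        then show ?thesis using e1 by (simp only:)
      qed
      show ?thesis unfolding u tswap_def using x e e1
        by (cases "y = x"; cases "y = x + 1"; cases "y = - x"; cases "y = - x - 1"; simp add: e2 e3)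
    qed
  qed
qed

lemma bond_update_0: "bond_update 0 \<eta> = sortE (-1) 1 \<eta>"
  by (simp add: bond_update_def sortE_def)

lemma bond_update_Suc:
  assumes "antis \<eta>" "b \<ge> 1"
  shows "bond_update b \<eta> = sortE (- int b - 1) (- int b) (sortE (int b) (int b + 1) \<eta>)"
proof -
  have a1: "\<eta> (- int b - 1) = - \<eta> (int b + 1)" "\<eta> (- int b) = - \<eta> (int b)"
    using assms(1) unfolding antis_def by (metis minus_diff_eq diff_minus_eq_add uminus_add_conv_diff add.commute)+
  show ?thesis
    using assms(2) a1 unfolding bond_update_def sortE_def tswap_def Let_def
    by (auto simp: fun_eq_iff)
qed

lemma win_split:
  assumes "a < c" "\<forall>y. a < y \<and> y < c \<longrightarrow> y = 0" "a \<noteq> 0" "c \<noteq> 0"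
     "- int w \<le> a" "c \<le> int w"
  shows "a < x \<Longrightarrow> x \<le> c \<Longrightarrow> win w x = insert c (win w (c+1))"
    and "win w a = insert a (insert c (win w (c+1)))"
    and "x \<le> a \<Longrightarrow> win w x = insert a (insert c (win w x - {a, c}))"
proof -
  have b: "\<And>y. a < y \<Longrightarrow> y < c \<Longrightarrow> y = 0" using assms(2) by blast
  show "a < x \<Longrightarrow> x \<le> c \<Longrightarrow> win w x = insert c (win w (c+1))"
    using assms b unfolding win_def by (auto; fastforce)
  show "win w a = insert a (insert c (win w (c+1)))"
    using assms b unfolding win_def by (auto; fastforce)
  show "x \<le> a \<Longrightarrow> win w x = insert a (insert c (win w x - {a, c}))"
    using assms unfolding win_def by auto
qed

lemma cnt_split:
  assumes "a < c" "\<forall>y. a < y \<and> y < c \<longrightarrow> y = 0" "a \<noteq> 0" "c \<noteq> 0"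
     "- int w \<le> a" "c \<le> int w"
  shows "a < x \<Longrightarrow> x \<le> c \<Longrightarrow> cnt w t \<eta> x = cnt w t \<eta> (c+1) + (if \<eta> c < t then 1 else 0)"
    and "cnt w t \<eta> a = cnt w t \<eta> (c+1) + (if \<eta> c < t then 1 else 0) + (if \<eta> a < t then 1 else 0)"
proof -
  have nc: "c \<notin> win w (c+1)" "a \<notin> win w (c+1)" using assms by (auto simp: win_def)
  show "a < x \<Longrightarrow> x \<le> c \<Longrightarrow> cnt w t \<eta> x = cnt w t \<eta> (c+1) + (if \<eta> c < t then 1 else 0)"
    unfolding cnt_def using win_split(1)[OF assms] nc by simp
  show "cnt w t \<eta> a = cnt w t \<eta> (c+1) + (if \<eta> c < t then 1 else 0) + (if \<eta> a < t then 1 else 0)"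
    unfolding cnt_def using win_split(2)[OF assms] nc assms(1) by simp
qed

lemma cnt_sortE:
  assumes "a < c" "\<forall>y. a < y \<and> y < c \<longrightarrow> y = 0" "a \<noteq> 0" "c \<noteq> 0"
     "- int w \<le> a" "c \<le> int w"
  shows "x \<le> a \<or> c < x \<Longrightarrow> cnt w t (sortE a c \<eta>) x = cnt w t \<eta> x"
    and "a < x \<Longrightarrow> x \<le> c \<Longrightarrow> cnt w t (sortE a c \<eta>) x
          = cnt w t \<eta> (c+1) + (if \<eta> a < t \<or> \<eta> c < t then 1 else 0)"
proof -
  have same: "\<And>y. y \<noteq> a \<Longrightarrow> y \<noteq> c \<Longrightarrow> sortE a c \<eta> y = \<eta> y"
    by (simp add: sortE_def tswap_def)
  have ac: "(if sortE a c \<eta> a < t then 1 else 0) + (if sortE a c \<eta> c < t then 1 else (0::nat))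
        = (if \<eta> a < t then 1 else 0) + (if \<eta> c < t then 1 else 0)"
    using assms(1) by (simp add: sortE_def tswap_def)
  have c1: "cnt w t (sortE a c \<eta>) (c+1) = cnt w t \<eta> (c+1)"
    unfolding cnt_def by (rule sum.cong) (use same assms(1) in \<open>auto simp: win_def\<close>)
  show "x \<le> a \<or> c < x \<Longrightarrow> cnt w t (sortE a c \<eta>) x = cnt w t \<eta> x"
  proof (elim disjE)
    assume "c < x"
    then show ?thesis unfolding cnt_def by (intro sum.cong) (use same assms(1) in \<open>auto simp: win_def\<close>)
  next
    assume xa: "x \<le> a"
    have na: "a \<notin> win w x - {a,c}" "c \<notin> win w x - {a,c}" by auto
    have r: "(\<Sum>y\<in>win w x - {a,c}. if sortE a c \<eta> y < t then 1 else (0::nat))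
           = (\<Sum>y\<in>win w x - {a,c}. if \<eta> y < t then 1 else 0)"
      by (rule sum.cong) (use same in auto)
    show ?thesis unfolding cnt_def
      apply (subst (1 2) win_split(3)[OF assms xa])
      using na assms(1) r ac by simp
  qed
  assume "a < x" "x \<le> c"
  then show "cnt w t (sortE a c \<eta>) x = cnt w t \<eta> (c+1) + (if \<eta> a < t \<or> \<eta> c < t then 1 else 0)"
    using cnt_split(1)[OF assms, of x t "sortE a c \<eta>"] c1 assms(1)
    by (auto simp: sortE_def tswap_def)
qed

lemma cnt_sortE_mono:
  assumes "a < c" "\<forall>y. a < y \<and> y < c \<longrightarrow> y = 0" "a \<noteq> 0" "c \<noteq> 0"
     "- int w \<le> a" "c \<le> int w"
  shows "cnt w t \<eta> x \<le> cnt w t (sortE a c \<eta>) x"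
proof (cases "a < x \<and> x \<le> c")
  case True
  then show ?thesis using cnt_sortE(2)[OF assms, of x t \<eta>] cnt_split(1)[OF assms, of x t \<eta>] by auto
next
  case False
  then show ?thesis using cnt_sortE(1)[OF assms, of x t \<eta>] by auto
qed



lemma arith_core:
  fixes Sf Sb cp Z :: nat
  assumes "Sf + (if Cf then 1 else 0) + (if Af then 1 else 0) = min (Sb + (if Cb then 1 else 0) + (if Ab then 1 else 0)) (min (cp + 2) Z)"
    and "Sf = min Sb (min cp Z)"
  shows "Sf + (if Af \<or> Cf then 1 else 0) = min (Sb + (if Ab \<or> Cb then 1 else 0)) (min (cp + 1) Z)"
  using assms by (cases Af; cases Cf; cases Ab; cases Cb) (simp_all add: min_def split: if_splits)

definition cap :: "nat \<Rightarrow> int \<Rightarrow> nat" where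
  "cap n x = cnt n 0 (\<lambda>_. -1) x"

definition R0 :: "nat \<Rightarrow> nat \<Rightarrow> int \<Rightarrow> nat \<Rightarrow> (int \<Rightarrow> int) \<Rightarrow> (int \<Rightarrow> int) \<Rightarrow> bool" where
  "R0 n M t Z ef eb \<longleftrightarrow> cnt n t ef (- int n) = Z \<and>
     (\<forall>x. - int n \<le> x \<and> x \<le> int n + 1 \<longrightarrow> cnt n t ef x = min (cnt M t eb x) (min (cap n x) Z))"

lemma R0_edge:
  assumes R: "R0 n M t Z ef eb"
    and adj: "a < c" "\<forall>y. a < y \<and> y < c \<longrightarrow> y = 0" "a \<noteq> 0" "c \<noteq> 0"
    and win: "- int n \<le> a" "c \<le> int n" and nM: "n \<le> M"
  shows "R0 n M t Z (sortE a c ef) (sortE a c eb)"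
proof -
  have winM: "- int M \<le> a" "c \<le> int M" using win nM by auto
  note sn = cnt_sortE[OF adj win] and sM = cnt_sortE[OF adj winM]
  note pn = cnt_split[OF adj win] and pM = cnt_split[OF adj winM]
  have Ra: "cnt n t ef a = min (cnt M t eb a) (min (cap n a) Z)"
    and Rc: "cnt n t ef (c+1) = min (cnt M t eb (c+1)) (min (cap n (c+1)) Z)"
    and R1: "cnt n t ef (- int n) = Z"
    using R adj win unfolding R0_def by auto
  show ?thesis unfolding R0_def
  proof (intro conjI allI impI)
    show "cnt n t (sortE a c ef) (- int n) = Z" proof -
      have "cnt n t (sortE a c ef) (- int n) = cnt n t ef (- int n)"
        by (rule sn(1)) (use win in simp)
      then show ?thesis using R1 by simp
    qed
    fix x assume x: "- int n \<le> x \<and> x \<le> int n + 1"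
    show "cnt n t (sortE a c ef) x = min (cnt M t (sortE a c eb) x) (min (cap n x) Z)"
    proof (cases "a < x \<and> x \<le> c")
      case False
      have e1: "cnt n t (sortE a c ef) x = cnt n t ef x" by (rule sn(1)) (use False in linarith)
      have e2: "cnt M t (sortE a c eb) x = cnt M t eb x" by (rule sM(1)) (use False in linarith)
      have Rx: "cnt n t ef x = min (cnt M t eb x) (min (cap n x) Z)" using R x unfolding R0_def by blast
      show ?thesis unfolding e1 e2 by (rule Rx)
    next
      case True
      have capx: "cap n x = cap n (c+1) + 1" and capa: "cap n a = cap n (c+1) + 2"
        unfolding cap_def using pn(1)[of x 0 "\<lambda>_. -1"] pn(2)[of 0 "\<lambda>_. -1"] True by auto
      have L: "cnt n t (sortE a c ef) x = cnt n t ef (c+1) + (if ef a < t \<or> ef c < t then 1 else 0)"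
        using sn(2)[of x t ef] True by auto
      have Rr: "cnt M t (sortE a c eb) x = cnt M t eb (c+1) + (if eb a < t \<or> eb c < t then 1 else 0)"
        using sM(2)[of x t eb] True by auto
      have A: "cnt n t ef (c+1) + (if ef c < t then 1 else 0) + (if ef a < t then 1 else 0)
          = min (cnt M t eb (c+1) + (if eb c < t then 1 else 0) + (if eb a < t then 1 else 0)) (min (cap n (c+1) + 2) Z)"
        using pn(2)[of t ef] pM(2)[of t eb] Ra capa by simp
      show ?thesis unfolding L Rr capx
        by (rule arith_core[OF A Rc])
    qed
  qed
qed

lemma R0_big_only:
  assumes R: "R0 n M t Z ef eb"
    and mono: "\<And>x. cnt M t eb x \<le> cnt M t eb' x"
    and same: "\<And>x. - int n < x \<Longrightarrow> x \<le> int n \<Longrightarrow> cnt M t eb' x = cnt M t eb x"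
  shows "R0 n M t Z ef eb'"
  unfolding R0_def
proof (intro conjI allI impI)
  show "cnt n t ef (- int n) = Z" using R unfolding R0_def by auto
  fix x assume x: "- int n \<le> x \<and> x \<le> int n + 1"
  have Rx: "cnt n t ef x = min (cnt M t eb x) (min (cap n x) Z)" using R x unfolding R0_def by auto
  consider "x = - int n" | "x = int n + 1" | "- int n < x \<and> x \<le> int n" using x by linarith
  then show "cnt n t ef x = min (cnt M t eb' x) (min (cap n x) Z)"
  proof cases
    case 1
    have "cnt n t ef x = Z" using R 1 unfolding R0_def by auto
    then show ?thesis using Rx mono[of x] by auto
  next
    case 2
    have "win n x = {}" using 2 by (auto simp: win_def)
    then show ?thesis by (simp add: cnt_def cap_def)
  next
    case 3 then show ?thesis using Rx same[of x] by auto
  qed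
qed

lemma cnt_bond_big:
  assumes "antis \<eta>" "1 \<le> b" "int b + 1 \<le> int M"
  shows "cnt M t \<eta> x \<le> cnt M t (bond_update b \<eta>) x"
    and "x \<noteq> int b + 1 \<Longrightarrow> x \<noteq> - int b \<Longrightarrow> cnt M t (bond_update b \<eta>) x = cnt M t \<eta> x"
proof -
  have adj1: "int b < int b + 1" "\<forall>y. int b < y \<and> y < int b + 1 \<longrightarrow> y = 0" "int b \<noteq> 0" "int b + 1 \<noteq> 0"
     "- int M \<le> int b" "int b + 1 \<le> int M" using assms by auto
  have adj2: "- int b - 1 < - int b" "\<forall>y. - int b - 1 < y \<and> y < - int b \<longrightarrow> y = 0" "- int b - 1 \<noteq> 0" "- int b \<noteq> 0"
     "- int M \<le> - int b - 1" "- int b \<le> int M" using assms by auto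
  have eq: "bond_update b \<eta> = sortE (- int b - 1) (- int b) (sortE (int b) (int b + 1) \<eta>)"
    using bond_update_Suc assms by auto
  show "cnt M t \<eta> x \<le> cnt M t (bond_update b \<eta>) x"
    unfolding eq using cnt_sortE_mono[OF adj1, of t \<eta> x] cnt_sortE_mono[OF adj2, of t "sortE (int b) (int b + 1) \<eta>" x]
    by linarith
  assume "x \<noteq> int b + 1" "x \<noteq> - int b"
  then have c1: "x \<le> int b \<or> int b + 1 < x" and c2: "x \<le> - int b - 1 \<or> - int b < x" by auto
  show "cnt M t (bond_update b \<eta>) x = cnt M t \<eta> x"
    unfolding eq cnt_sortE(1)[OF adj2 c2] cnt_sortE(1)[OF adj1 c1] ..
qed

definition Rel where
  "Rel n M t Z ef eb \<longleftrightarrow> antis ef \<and> antis eb \<and> R0 n M t Z ef eb"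

lemma Rel_step:
  assumes R: "Rel n M t Z ef eb" and bM: "b < M" and nM: "n \<le> M" and n1: "1 \<le> n"
  shows "Rel n M t Z (if b < n then bond_update b ef else ef) (bond_update b eb)"
proof (cases "b < n")
  case True
  have R0': "R0 n M t Z (bond_update b ef) (bond_update b eb)"
  proof (cases "b = 0")
    case True
    have "R0 n M t Z (sortE (-1) 1 ef) (sortE (-1) 1 eb)"
      using R0_edge[of n M t Z ef eb "-1" 1] R n1 nM unfolding Rel_def by auto
    then show ?thesis using True by (simp add: bond_update_0)
  next
    case False
    have e1: "bond_update b ef = sortE (- int b - 1) (- int b) (sortE (int b) (int b + 1) ef)"
      "bond_update b eb = sortE (- int b - 1) (- int b) (sortE (int b) (int b + 1) eb)"
      using bond_update_Suc R False unfolding Rel_def by auto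
    have "R0 n M t Z (sortE (int b) (int b + 1) ef) (sortE (int b) (int b + 1) eb)"
      using R0_edge[of n M t Z ef eb "int b" "int b + 1"] R False True nM unfolding Rel_def by auto
    then show ?thesis unfolding e1
      using R0_edge[of n M t Z _ _ "- int b - 1" "- int b"] False True nM by auto
  qed
  moreover have "antis (bond_update b ef)" "antis (bond_update b eb)"
    using R antis_bond_update unfolding Rel_def by blast+
  ultimately show ?thesis using True unfolding Rel_def by simp
next
  case False
  have "R0 n M t Z ef (bond_update b eb)"
  proof (rule R0_big_only[of _ _ _ _ _ eb])
    have a: "antis eb" "1 \<le> b" "int b + 1 \<le> int M" using R False bM n1 unfolding Rel_def by auto
    show "R0 n M t Z ef eb" using R unfolding Rel_def by auto
    show "\<And>x. cnt M t eb x \<le> cnt M t (bond_update b eb) x" by (rule cnt_bond_big(1)[OF a])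
    fix x assume "- int n < x" "x \<le> int n"
    then have "x \<noteq> int b + 1" "x \<noteq> - int b" using False by auto
    then show "cnt M t (bond_update b eb) x = cnt M t eb x" by (rule cnt_bond_big(2)[OF a])
  qed
  moreover have "antis ef" "antis (bond_update b eb)"
    using R antis_bond_update unfolding Rel_def by blast+
  ultimately show ?thesis using False unfolding Rel_def by simp
qed

lemma Rel_fold:
  assumes "Rel n M t Z ef eb" "\<forall>b\<in>set L. b < M" "n \<le> M" "1 \<le> n"
  shows "Rel n M t Z (fold bond_update (filter (\<lambda>b. b < n) L) ef) (fold bond_update L eb)"
  using assms
proof (induction L arbitrary: ef eb)
  case Nil then show ?case by simp
next
  case (Cons b L)
  have bM: "b < M" using Cons.prems(2) by simp
  have bs: "\<forall>b\<in>set L. b < M" using Cons.prems(2) by simp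
  have st: "Rel n M t Z (if b < n then bond_update b ef else ef) (bond_update b eb)"
    by (rule Rel_step[OF Cons.prems(1) bM Cons.prems(3,4)])
  have IH: "Rel n M t Z (fold bond_update (filter (\<lambda>b. b < n) L) (if b < n then bond_update b ef else ef))
                 (fold bond_update L (bond_update b eb))"
    by (rule Cons.IH[OF st bs Cons.prems(3,4)])
  have e: "fold bond_update (filter (\<lambda>b. b < n) (b # L)) ef
         = fold bond_update (filter (\<lambda>b. b < n) L) (if b < n then bond_update b ef else ef)"
    by (cases "b < n") (simp_all only: filter.simps fold_Cons comp_def if_True if_False)
  show ?case unfolding e fold_Cons comp_def by (rule IH)
qed



lemma bond_rate_pos: "0 < \<mu> \<Longrightarrow> 0 < bond_rate \<mu> b"
  by (simp add: bond_rate_def)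

lemma ps_comp: "0 < \<mu> \<Longrightarrow> prob_space (density lborel (exponential_density (bond_rate \<mu> b)))"
  using prob_space_exponential_density bond_rate_pos by blast

lemma ps_clock: "0 < \<mu> \<Longrightarrow> prob_space (clock_space \<mu>)"
  unfolding clock_space_def by (rule prob_space_PiM) (rule ps_comp)

lemma space_clock: "space (clock_space \<mu>) = UNIV"
  unfolding clock_space_def by (simp add: space_PiM)

lemma emeasure_clock_Collect:
  assumes mu: "0 < \<mu>" and J: "finite J"
  shows "emeasure (clock_space \<mu>) {x. \<forall>i\<in>J. x i \<le> T}
       = (\<Prod>i\<in>J. ennreal (erlang_CDF 0 (bond_rate \<mu> (fst i)) T))"
proof -
  let ?M = "\<lambda>bk. density lborel (exponential_density (bond_rate \<mu> (fst bk)))"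
  have "{x. \<forall>i\<in>J. x i \<le> T} = prod_emb UNIV ?M J (Pi\<^sub>E J (\<lambda>_. {..T}))"
    unfolding prod_emb_def by (auto simp: space_PiM Pi_iff PiE_iff)
  then have "emeasure (clock_space \<mu>) {x. \<forall>i\<in>J. x i \<le> T} = (\<Prod>i\<in>J. emeasure (?M i) {..T})"
    unfolding clock_space_def
    by (simp only:) (rule emeasure_PiM_emb, auto intro: ps_comp[OF mu] J)
  also have "\<dots> = (\<Prod>i\<in>J. ennreal (erlang_CDF 0 (bond_rate \<mu> (fst i)) T))"
    by (rule prod.cong) (auto intro: emeasure_erlang_density bond_rate_pos mu)
  finally show ?thesis .
qed

lemma erlang0_lt1: "0 < r \<Longrightarrow> erlang_CDF 0 r T < 1"
  by (simp add: erlang_CDF_0)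

lemma erlang0_nonneg: "0 < r \<Longrightarrow> 0 \<le> erlang_CDF 0 r T"
  by simp

lemma AE_inf_often:
  fixes c :: "nat \<Rightarrow> nat \<times> nat" and T :: real
  assumes mu: "0 < \<mu>" and c: "inj c"
  shows "AE \<omega> in clock_space \<mu>. \<forall>N. \<exists>k\<ge>N. T < \<omega> (c k)"
proof -
  interpret P: prob_space "clock_space \<mu>" by (rule ps_clock[OF mu])
  define q where "q = max (erlang_CDF 0 \<mu> T) (erlang_CDF 0 1 T)"
  have q0: "0 \<le> q" unfolding q_def by (rule order.trans[OF _ max.cobounded2]) simp
  have q: "0 \<le> q" "q < 1" using q0 unfolding q_def using mu by (auto simp: erlang_CDF_0)
  have fq: "\<And>i. erlang_CDF 0 (bond_rate \<mu> (fst i)) T \<le> q"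
    unfolding q_def bond_rate_def by auto
  define B where "B (N::nat) = {\<omega>::nat\<times>nat\<Rightarrow>real. \<forall>k\<ge>N. \<omega> (c k) \<le> T}" for N
  have Bsets: "B N \<in> sets (clock_space \<mu>)" for N
  proof -
    have "B N = {\<omega>\<in>space (clock_space \<mu>). \<forall>k. \<omega> (c (k + N)) \<le> T}"
      unfolding B_def space_clock by (auto, metis le_add_diff_inverse2)
    also have "\<dots> \<in> sets (clock_space \<mu>)"
      unfolding clock_space_def by measurable
    finally show ?thesis .
  qed
  have Bnull: "B N \<in> null_sets (clock_space \<mu>)" for N
  proof -
    have le: "P.prob (B N) \<le> q ^ K" for K
    proof -
      define J where "J = c ` {N..<N+K}"
      have fJ: "finite J" and cJ: "card J = K" unfolding J_def using c
        by (auto simp: card_image inj_on_subset)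
      have EJ: "{x. \<forall>i\<in>J. x i \<le> T} \<in> sets (clock_space \<mu>)"
      proof -
        have "{x. \<forall>i\<in>J. x i \<le> T} = (\<Inter>i\<in>J. {\<omega>\<in>space (clock_space \<mu>). \<omega> i \<le> T}) \<inter> space (clock_space \<mu>)"
          unfolding space_clock by auto
        also have "\<dots> \<in> sets (clock_space \<mu>)"
          using fJ unfolding clock_space_def by measurable
        finally show ?thesis .
      qed
      have sub: "B N \<subseteq> {x. \<forall>i\<in>J. x i \<le> T}" unfolding B_def J_def by auto
      have "P.prob (B N) \<le> P.prob {x. \<forall>i\<in>J. x i \<le> T}"
        by (rule P.finite_measure_mono[OF sub EJ])
      also have "P.prob {x. \<forall>i\<in>J. x i \<le> T} = (\<Prod>i\<in>J. erlang_CDF 0 (bond_rate \<mu> (fst i)) T)"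
      proof -
        have "ennreal (P.prob {x. \<forall>i\<in>J. x i \<le> T}) = ennreal (\<Prod>i\<in>J. erlang_CDF 0 (bond_rate \<mu> (fst i)) T)"
          using emeasure_clock_Collect[OF mu fJ, of T] P.emeasure_eq_measure
          by (simp add: prod_ennreal bond_rate_pos[OF mu])
        then show ?thesis
          by (subst (asm) ennreal_inj) (auto intro!: prod_nonneg simp: bond_rate_pos[OF mu])
      qed
      also have "\<dots> \<le> (\<Prod>i\<in>J. q)"
        by (rule prod_mono) (auto simp: fq bond_rate_pos[OF mu])
      also have "\<dots> = q ^ K" using cJ by simp
      finally show ?thesis .
    qed
    have "(\<lambda>K. q ^ K) \<longlonglongrightarrow> 0" using q by (intro LIMSEQ_power_zero) auto
    then have "P.prob (B N) \<le> 0" using le by (intro LIMSEQ_le_const) auto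
    then have "P.prob (B N) = 0" using measure_nonneg[of "clock_space \<mu>" "B N"] by linarith
    then show ?thesis using Bsets by (auto simp: null_sets_def P.emeasure_eq_measure)
  qed
  show ?thesis
  proof (rule AE_I')
    show "(\<Union>N. B N) \<in> null_sets (clock_space \<mu>)" using Bnull by (rule null_sets_UN)
    show "{\<omega> \<in> space (clock_space \<mu>). \<not> (\<forall>N. \<exists>k\<ge>N. T < \<omega> (c k))} \<subseteq> (\<Union>N. B N)"
      unfolding B_def by (auto simp: not_less)
  qed
qed

lemma AE_pos:
  assumes mu: "0 < \<mu>"
  shows "AE \<omega> in clock_space \<mu>. \<forall>c. 0 < \<omega> c"
proof -
  interpret P: prob_space "clock_space \<mu>" by (rule ps_clock[OF mu])
  have "AE \<omega> in clock_space \<mu>. 0 < \<omega> c" for c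
  proof (rule AE_I')
    have "emeasure (clock_space \<mu>) {x. \<forall>i\<in>{c}. x i \<le> 0} = 0"
      using emeasure_clock_Collect[OF mu, of "{c}" 0] by (simp add: erlang_CDF_0)
    moreover have "{x. \<forall>i\<in>{c}. x i \<le> 0} \<in> sets (clock_space \<mu>)"
    proof -
      have "{x. \<forall>i\<in>{c}. x i \<le> (0::real)} = {\<omega>\<in>space (clock_space \<mu>). \<omega> c \<le> 0}"
        unfolding space_clock by auto
      also have "\<dots> \<in> sets (clock_space \<mu>)" unfolding clock_space_def by measurable
      finally show ?thesis .
    qed
    ultimately show "{x. \<forall>i\<in>{c}. x i \<le> 0} \<in> null_sets (clock_space \<mu>)" by (auto simp: null_sets_def)
    show "{\<omega> \<in> space (clock_space \<mu>). \<not> 0 < \<omega> c} \<subseteq> {x. \<forall>i\<in>{c}. x i \<le> 0}" by auto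
  qed
  then show ?thesis by (subst AE_all_countable) auto
qed



definition LL :: "(nat \<times> nat \<Rightarrow> real) \<Rightarrow> real \<Rightarrow> nat \<Rightarrow> nat list" where
  "LL \<omega> \<tau> m = concat (map (bonds_ringing_at \<omega> m) (sorted_list_of_set (ring_times \<omega> m \<tau>)))"

lemma finite_config_LL: "finite_config m \<omega> \<tau> = fold bond_update (LL \<omega> \<tau> m) id"
  by (simp add: finite_config_def LL_def)

lemma sorted_list_of_set_inf: "\<not> finite A \<Longrightarrow> sorted_list_of_set A = []"
  by (rule sorted_list_of_set.fold_insort_key.infinite)

lemma set_sls_sub: "set (sorted_list_of_set A) \<subseteq> A"
  by (cases "finite A") (auto simp: sorted_list_of_set_inf)

lemma LL_set:
  assumes "b \<in> set (LL \<omega> \<tau> m)"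
  shows "b < m \<and> (\<exists>k. ring_time \<omega> b k \<le> \<tau>)"
proof -
  obtain t where t: "t \<in> set (sorted_list_of_set (ring_times \<omega> m \<tau>))" "b \<in> set (bonds_ringing_at \<omega> m t)"
    using assms unfolding LL_def by auto
  have "t \<in> ring_times \<omega> m \<tau>" using t(1) set_sls_sub by blast
  then have tt: "t \<le> \<tau>" unfolding ring_times_def by auto
  have fin: "finite {b. b < m \<and> (\<exists>k. ring_time \<omega> b k = t)}" by (rule finite_subset[of _ "{..<m}"]) auto
  then have "b < m \<and> (\<exists>k. ring_time \<omega> b k = t)" using t(2) unfolding bonds_ringing_at_def by auto
  then show ?thesis using tt by auto
qed

lemma filter_sls:
  assumes "finite A"
  shows "filter P (sorted_list_of_set A) = sorted_list_of_set {x\<in>A. P x}"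
proof -
  have fA: "finite {x\<in>A. P x}" using assms by auto
  show ?thesis
  proof (rule strict_sorted_equal)
    show "sorted_wrt (<) (sorted_list_of_set {x \<in> A. P x})" by (rule strict_sorted_list_of_set)
    show "sorted_wrt (<) (filter P (sorted_list_of_set A))"
      using sorted_wrt_filter strict_sorted_list_of_set by blast
    show "set (filter P (sorted_list_of_set A)) = set (sorted_list_of_set {x \<in> A. P x})"
      using assms fA by auto
  qed
qed

lemma concat_map_filter_nil:
  assumes "\<And>x. x \<in> set xs \<Longrightarrow> \<not> Q x \<Longrightarrow> g x = []"
  shows "concat (map g xs) = concat (map g (filter Q xs))"
  using assms by (induction xs) auto

lemma LL_filter:
  assumes fin: "finite (ring_times \<omega> m' \<tau>)" and mm: "m \<le> m'"
  shows "filter (\<lambda>b. b < m) (LL \<omega> \<tau> m') = LL \<omega> \<tau> m"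
proof -
  let ?A' = "ring_times \<omega> m' \<tau>" and ?A = "ring_times \<omega> m \<tau>"
  have sub: "?A \<subseteq> ?A'" using mm unfolding ring_times_def by (force intro: less_le_trans)
  have fb: "filter (\<lambda>b. b < m) (bonds_ringing_at \<omega> m' t) = bonds_ringing_at \<omega> m t" for t
  proof -
    have "finite {b. b < m' \<and> (\<exists>k. ring_time \<omega> b k = t)}" by (rule finite_subset[of _ "{..<m'}"]) auto
    then show ?thesis unfolding bonds_ringing_at_def
      by (subst filter_sls) (auto intro!: arg_cong[where f=sorted_list_of_set] simp: mm less_le_trans[OF _ mm])
  qed
  have "filter (\<lambda>b. b < m) (LL \<omega> \<tau> m') = concat (map (bonds_ringing_at \<omega> m) (sorted_list_of_set ?A'))"
    unfolding LL_def filter_concat map_map comp_def fb ..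
  also have "\<dots> = concat (map (bonds_ringing_at \<omega> m) (filter (\<lambda>t. t \<in> ?A) (sorted_list_of_set ?A')))"
  proof (rule concat_map_filter_nil)
    fix t assume t: "t \<in> set (sorted_list_of_set ?A')" "t \<notin> ?A"
    have tA: "t \<in> ?A'" using t(1) set_sls_sub by blast
    then have "t \<le> \<tau>" unfolding ring_times_def by auto
    have "{b. b < m \<and> (\<exists>k. ring_time \<omega> b k = t)} = {}"
      using t(2) \<open>t \<le> \<tau>\<close> unfolding ring_times_def by auto
    then show "bonds_ringing_at \<omega> m t = []" unfolding bonds_ringing_at_def by simp
  qed
  also have "filter (\<lambda>t. t \<in> ?A) (sorted_list_of_set ?A') = sorted_list_of_set ?A"
  proof -
    have "{x\<in>?A'. x \<in> ?A} = ?A" using sub by blast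
    then show ?thesis using filter_sls[OF fin, of "\<lambda>t. t \<in> ?A"] by simp
  qed
  finally show ?thesis unfolding LL_def .
qed

definition agree :: "nat \<Rightarrow> (int \<Rightarrow> int) \<Rightarrow> (int \<Rightarrow> int) \<Rightarrow> bool" where
  "agree m e e' \<longleftrightarrow> (\<forall>x. 1 \<le> \<bar>x\<bar> \<and> \<bar>x\<bar> \<le> int m \<longrightarrow> e x = e' x)"

lemma agree_small:
  assumes "agree m e e'" "b < m"
  shows "agree m (bond_update b e) (bond_update b e')"
proof -
  have a: "\<And>x. 1 \<le> \<bar>x\<bar> \<Longrightarrow> \<bar>x\<bar> \<le> int m \<Longrightarrow> e x = e' x" using assms(1) unfolding agree_def by auto
  show ?thesis
  proof (cases "b = 0")
    case True
    have "e (-1) = e' (-1)" "e 1 = e' 1" using a assms(2) by auto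
    then show ?thesis using True a unfolding agree_def bond_update_def tswap_def by auto
  next
    case False
    have "e (int b) = e' (int b)" "e (int b + 1) = e' (int b + 1)" "e (- int b) = e' (- int b)"
      "e (- int b - 1) = e' (- int b - 1)" using a assms(2) False by auto
    then show ?thesis using False a unfolding agree_def bond_update_def tswap_def Let_def by auto
  qed
qed

lemma agree_big:
  assumes "agree m e e'" "m < b"
  shows "agree m (bond_update b e) e'"
  using assms unfolding agree_def bond_update_def tswap_def Let_def by auto

lemma agree_fold:
  assumes "\<forall>b\<in>set L. b \<noteq> m" "agree m e e'"
  shows "agree m (fold bond_update L e) (fold bond_update (filter (\<lambda>b. b < m) L) e')"
  using assms
proof (induction L arbitrary: e e')
  case Nil then show ?case by simp
next
  case (Cons b L)
  show ?case
  proof (cases "b < m")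
    case True
    then show ?thesis using Cons.IH[of "bond_update b e" "bond_update b e'"] Cons.prems agree_small by simp
  next
    case False
    then have "m < b" using Cons.prems(1) by auto
    then show ?thesis using Cons.IH[of "bond_update b e" "e'"] Cons.prems agree_big False by simp
  qed
qed

definition outside :: "nat \<Rightarrow> (int \<Rightarrow> int) \<Rightarrow> bool" where
  "outside m e \<longleftrightarrow> (\<forall>x. int m < x \<longrightarrow> int m < e x) \<and> (\<forall>x. x < - int m \<longrightarrow> e x < - int m)"

lemma outside_step:
  assumes "outside m e" "b \<noteq> m"
  shows "outside m (bond_update b e)"
proof (cases "b < m")
  case True
  then show ?thesis using assms unfolding outside_def bond_update_def tswap_def Let_def by auto
next
  case False
  then have "m < b" using assms by auto
  then show ?thesis using assms unfolding outside_def bond_update_def tswap_def Let_def by auto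
qed

lemma outside_fold:
  "\<forall>b\<in>set L. b \<noteq> m \<Longrightarrow> outside m e \<Longrightarrow> outside m (fold bond_update L e)"
  by (induction L arbitrary: e) (auto intro: outside_step)

lemma antis_fold: "antis e \<Longrightarrow> antis (fold bond_update L e)"
  by (induction L arbitrary: e) (auto intro: antis_bond_update)



lemma cnt_card: "cnt w t \<eta> x = card {y\<in>win w x. \<eta> y < t}"
proof -
  have "cnt w t \<eta> x = (\<Sum>y\<in>win w x. of_bool (\<eta> y < t))" unfolding cnt_def by (rule sum.cong) auto
  also have "\<dots> = card (win w x \<inter> {y. \<eta> y < t})" by simp
  finally show ?thesis by (simp add: Int_def)
qed

lemma cnt_id: assumes "- int w \<le> x" "t \<le> 0" shows "cnt w t id x = nat (t - x)"
proof -
  have "{y\<in>win w x. id y < t} = {x..<t}" using assms by (auto simp: win_def)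
  then show ?thesis unfolding cnt_card by simp
qed

lemma cnt_le_cap: "cnt w t \<eta> x \<le> cap w x"
  unfolding cap_def cnt_def by (rule sum_mono) auto

lemma cap_val: assumes "1 \<le> j" shows "cap w j = nat (int w - j + 1)"
proof -
  have e: "win w j = {j..int w}" using assms by (auto simp: win_def)
  have "cap w j = card (win w j)" unfolding cap_def cnt_card by simp
  then show ?thesis unfolding e by simp
qed

lemma height_conv:
  assumes a: "antis \<eta>" and j: "1 \<le> j"
  shows "card {y. y \<noteq> 0 \<and> - int w \<le> y \<and> y \<le> - j \<and> j \<le> \<eta> y} = cnt w (1 - j) \<eta> j"
proof -
  have e: "\<And>y. \<eta> (- y) = - \<eta> y" using a unfolding antis_def by auto
  have "{y. y \<noteq> 0 \<and> - int w \<le> y \<and> y \<le> - j \<and> j \<le> \<eta> y} = uminus ` {y\<in>win w j. \<eta> y < 1 - j}"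
  proof (intro set_eqI iffI)
    fix y assume "y \<in> {y. y \<noteq> 0 \<and> - int w \<le> y \<and> y \<le> - j \<and> j \<le> \<eta> y}"
    then have "- y \<in> {y\<in>win w j. \<eta> y < 1 - j}" using e[of y] j by (auto simp: win_def)
    then show "y \<in> uminus ` {y\<in>win w j. \<eta> y < 1 - j}" by (metis image_eqI minus_minus)
  next
    fix y assume "y \<in> uminus ` {y\<in>win w j. \<eta> y < 1 - j}"
    then obtain z where z: "y = - z" "z \<in> win w j" "\<eta> z < 1 - j" by auto
    then show "y \<in> {y. y \<noteq> 0 \<and> - int w \<le> y \<and> y \<le> - j \<and> j \<le> \<eta> y}" using e[of z] j by (auto simp: win_def)
  qed
  then show ?thesis unfolding cnt_card by (simp add: card_image)
qed

lemma rt_mono: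
  assumes pos: "\<forall>c. 0 < \<omega> c" and "k \<le> k'"
  shows "ring_time \<omega> b k \<le> ring_time \<omega> b k'"
  unfolding ring_time_def using assms by (intro sum_mono2) (auto intro: less_imp_le)

lemma rt_ge0: assumes pos: "\<forall>c. 0 < \<omega> c" shows "\<omega> (b, 0) \<le> ring_time \<omega> b k"
  unfolding ring_time_def using pos by (intro member_le_sum) (auto intro: less_imp_le)

lemma rt_unbounded:
  assumes pos: "\<forall>c. 0 < \<omega> c" and io: "\<forall>N. \<exists>k\<ge>N. 1 < \<omega> (b, k)"
  shows "\<exists>k. T < ring_time \<omega> b k"
proof -
  have "\<exists>k. real n \<le> ring_time \<omega> b k" for n
  proof (induction n)
    case 0 then show ?case using rt_ge0[OF pos, of b 0] pos by (metis of_nat_0 order.trans less_imp_le)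
  next
    case (Suc n)
    then obtain k where k: "real n \<le> ring_time \<omega> b k" by blast
    obtain k' where k': "Suc k \<le> k'" "1 < \<omega> (b, k')" using io by blast
    have "ring_time \<omega> b k + \<omega> (b, k') = (\<Sum>j\<in>insert k' {..k}. \<omega> (b, j))"
      unfolding ring_time_def using k' by simp
    also have "\<dots> \<le> ring_time \<omega> b k'" unfolding ring_time_def
      using pos k' by (intro sum_mono2) (auto intro: less_imp_le)
    finally show ?case using k k' by (intro exI[of _ k']) simp
  qed
  then obtain k where "real (nat \<lceil>T\<rceil> + 1) \<le> ring_time \<omega> b k" by blast
  moreover have "T < real (nat \<lceil>T\<rceil> + 1)" by linarith
  ultimately show ?thesis by (intro exI[of _ k]) linarith
qed

lemma finite_ring_times:
  assumes pos: "\<forall>c. 0 < \<omega> c" and fin: "\<forall>b (T::real). \<exists>k. T < ring_time \<omega> b k"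
  shows "finite (ring_times \<omega> m \<tau>)"
proof -
  define kb where "kb b = (SOME k. \<tau> < ring_time \<omega> b k)" for b
  have kb: "\<tau> < ring_time \<omega> b (kb b)" for b unfolding kb_def using fin by (metis someI_ex)
  have "ring_times \<omega> m \<tau> \<subseteq> (\<Union>b\<in>{..<m}. ring_time \<omega> b ` {..<kb b})"
  proof
    fix t assume "t \<in> ring_times \<omega> m \<tau>"
    then obtain b k where bk: "t = ring_time \<omega> b k" "b < m" "ring_time \<omega> b k \<le> \<tau>"
      unfolding ring_times_def by auto
    have "k < kb b"
    proof (rule ccontr)
      assume "\<not> k < kb b"
      then have "ring_time \<omega> b (kb b) \<le> ring_time \<omega> b k" using rt_mono[OF pos] by simp
      then show False using kb[of b] bk by linarith
    qed
    then show "t \<in> (\<Union>b\<in>{..<m}. ring_time \<omega> b ` {..<kb b})" using bk by auto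
  qed
  then show ?thesis by (rule finite_subset) auto
qed

lemma det:
  fixes \<omega> :: "nat \<times> nat \<Rightarrow> real" and \<tau> :: real and n i :: nat
  assumes pos: "\<forall>c. 0 < \<omega> c" and fin: "\<forall>b (T::real). \<exists>k. T < ring_time \<omega> b k"
    and unr: "\<forall>N. \<exists>m\<ge>N. \<forall>k. \<tau> < ring_time \<omega> m k" and n1: "1 \<le> n" and i: "i < n"
  shows "height_fin n \<omega> \<tau> (int i + 1) (- int i - 1) = min (height_inf \<omega> \<tau> (int i + 1) (- int i - 1)) (n - i)"
proof -
  define U where "U m \<longleftrightarrow> (\<forall>k. \<tau> < ring_time \<omega> m k)" for m
  have finRT: "\<And>m. finite (ring_times \<omega> m \<tau>)" using finite_ring_times[OF pos fin] by blast
  have notin: "\<And>m m'. U m \<Longrightarrow> m \<notin> set (LL \<omega> \<tau> m')"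
    using LL_set unfolding U_def by (metis not_le)
  define M where "M = (LEAST m. n \<le> m \<and> U m)"
  have exM: "\<exists>m. n \<le> m \<and> U m" using unr unfolding U_def by blast
  have M: "n \<le> M" "U M" using LeastI_ex[OF exM] unfolding M_def by auto
  define eM where "eM = fold bond_update (LL \<omega> \<tau> M) id"
  define ef where "ef = fold bond_update (filter (\<lambda>b. b < n) (LL \<omega> \<tau> M)) id"
  have ef_fin: "finite_config n \<omega> \<tau> = ef"
    unfolding finite_config_LL ef_def LL_filter[OF finRT M(1)] ..
  have inf1: "infinite_config \<omega> \<tau> y = eM y" if y: "1 \<le> \<bar>y\<bar>" "\<bar>y\<bar> \<le> int M" for y
  proof -
    define m0 where "m0 = (LEAST m. nat \<bar>y\<bar> \<le> m \<and> 1 \<le> m \<and> U m)"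
    have ex: "\<exists>m. nat \<bar>y\<bar> \<le> m \<and> 1 \<le> m \<and> U m" using M n1 y by (intro exI[of _ M]) auto
    have m0: "nat \<bar>y\<bar> \<le> m0" "1 \<le> m0" "U m0" using LeastI_ex[OF ex] unfolding m0_def by auto
    have m0M: "m0 \<le> M" unfolding m0_def by (rule Least_le) (use M n1 y in auto)
    have ag: "agree m0 eM (fold bond_update (filter (\<lambda>b. b < m0) (LL \<omega> \<tau> M)) id)"
      unfolding eM_def by (rule agree_fold) (use notin[OF m0(3)] in \<open>auto simp: agree_def\<close>)
    then have "agree m0 eM (finite_config m0 \<omega> \<tau>)"
      unfolding finite_config_LL LL_filter[OF finRT m0M] .
    then have "eM y = finite_config m0 \<omega> \<tau> y" using y m0 unfolding agree_def by auto
    moreover have "infinite_config \<omega> \<tau> y = finite_config m0 \<omega> \<tau> y"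
      unfolding infinite_config_def m0_def U_def ..
    ultimately show ?thesis by simp
  qed
  have inf2: "infinite_config \<omega> \<tau> y < - int M" if y: "y < - int M" for y
  proof -
    define m0 where "m0 = (LEAST m. nat \<bar>y\<bar> \<le> m \<and> 1 \<le> m \<and> U m)"
    obtain m where m: "max (nat \<bar>y\<bar>) 1 \<le> m" "U m" using unr unfolding U_def by blast
    have ex: "\<exists>m. nat \<bar>y\<bar> \<le> m \<and> 1 \<le> m \<and> U m" using m by (intro exI[of _ m]) auto
    have m0: "nat \<bar>y\<bar> \<le> m0" "1 \<le> m0" "U m0" using LeastI_ex[OF ex] unfolding m0_def by auto
    have "outside M (fold bond_update (LL \<omega> \<tau> m0) id)"
      by (rule outside_fold) (use notin[OF M(2)] in \<open>auto simp: outside_def\<close>)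
    then have "finite_config m0 \<omega> \<tau> y < - int M" using y unfolding finite_config_LL outside_def by auto
    moreover have "infinite_config \<omega> \<tau> y = finite_config m0 \<omega> \<tau> y"
      unfolding infinite_config_def m0_def U_def ..
    ultimately show ?thesis by simp
  qed
  define j where "j = int i + 1"
  define t where "t = 1 - j"
  define Z where "Z = n - i"
  have j1: "1 \<le> j" unfolding j_def by simp
  have jn: "j \<le> int n" using i unfolding j_def by simp
  have hf: "height_fin n \<omega> \<tau> j (- j) = cnt n t ef j"
    unfolding height_fin_def ef_fin t_def
    by (rule height_conv[OF _ j1]) (simp add: ef_def antis_fold antis_id)
  have hi: "height_inf \<omega> \<tau> j (- j) = cnt M t eM j"
  proof -
    have "{y. y \<noteq> 0 \<and> y \<le> - j \<and> j \<le> infinite_config \<omega> \<tau> y}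
        = {y. y \<noteq> 0 \<and> - int M \<le> y \<and> y \<le> - j \<and> j \<le> eM y}"
    proof (intro set_eqI iffI)
      fix y assume y: "y \<in> {y. y \<noteq> 0 \<and> y \<le> - j \<and> j \<le> infinite_config \<omega> \<tau> y}"
      show "y \<in> {y. y \<noteq> 0 \<and> - int M \<le> y \<and> y \<le> - j \<and> j \<le> eM y}"
      proof (cases "- int M \<le> y")
        case True then show ?thesis using y inf1[of y] j1 by auto
      next
        case False then show ?thesis using y inf2[of y] j1 by auto
      qed
    next
      fix y assume y: "y \<in> {y. y \<noteq> 0 \<and> - int M \<le> y \<and> y \<le> - j \<and> j \<le> eM y}"
      then show "y \<in> {y. y \<noteq> 0 \<and> y \<le> - j \<and> j \<le> infinite_config \<omega> \<tau> y}" using inf1[of y] j1 by auto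
    qed
    then show ?thesis unfolding height_inf_def t_def
      using height_conv[OF _ j1, of eM M] by (simp add: eM_def antis_fold antis_id)
  qed
  have tn: "t \<le> 0" unfolding t_def using j1 by simp
  have Rinit: "Rel n M t Z id id"
    unfolding Rel_def R0_def
  proof (intro conjI allI impI antis_id)
    show "cnt n t id (- int n) = Z" using cnt_id[of n "- int n" t] tn unfolding Z_def t_def j_def by simp
    fix x assume x: "- int n \<le> x \<and> x \<le> int n + 1"
    have e1: "cnt n t id x = nat (t - x)" using cnt_id[of n x t] x tn by simp
    have e2: "cnt M t id x = nat (t - x)" using cnt_id[of M x t] x tn M(1) by simp
    have "nat (t - x) \<le> Z" using x i unfolding Z_def t_def j_def by (simp add: nat_le_iff of_nat_diff)
    moreover have "nat (t - x) \<le> cap n x" using cnt_le_cap[of n t id x] e1 by simp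
    ultimately show "cnt n t id x = min (cnt M t id x) (min (cap n x) Z)" unfolding e1 e2 by simp
  qed
  have "Rel n M t Z ef eM"
    unfolding ef_def eM_def
    by (rule Rel_fold[OF Rinit _ M(1) n1]) (use LL_set in blast)
  then have "cnt n t ef j = min (cnt M t eM j) (min (cap n j) Z)"
    unfolding Rel_def R0_def using j1 jn by auto
  moreover have "cap n j = Z" unfolding Z_def using cap_val[OF j1, of n] i unfolding j_def by simp
  ultimately have fin_eq: "height_fin n \<omega> \<tau> j (- j) = min (height_inf \<omega> \<tau> j (- j)) Z"
    using hf hi by simp
  moreover have jj: "int i + 1 = j" "- int i - 1 = - j" unfolding j_def by simp_all
  ultimately show ?thesis unfolding jj Z_def by blast
qed



theorem proposition5p4:
  fixes n :: nat and \<mu> :: real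
  assumes "1 \<le> n" and "0 < \<mu>"
  shows "AE \<omega> in clock_space \<mu>. \<forall>\<tau>\<ge>0. \<forall>i<n.
           height_fin n \<omega> \<tau> (int i + 1) (- int i - 1)
             = min (height_inf \<omega> \<tau> (int i + 1) (- int i - 1)) (n - i)"
proof -
  have A1: "AE \<omega> in clock_space \<mu>. \<forall>c. 0 < \<omega> c" by (rule AE_pos[OF assms(2)])
  have A2: "AE \<omega> in clock_space \<mu>. \<forall>b. \<forall>N. \<exists>k\<ge>N. 1 < \<omega> (b, k)"
  proof (subst AE_all_countable, intro allI)
    fix b :: nat
    show "AE \<omega> in clock_space \<mu>. \<forall>N. \<exists>k\<ge>N. 1 < \<omega> (b, k)"
      using AE_inf_often[OF assms(2), of "\<lambda>k. (b, k)" 1] by (simp add: inj_def)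
  qed
  have A3: "AE \<omega> in clock_space \<mu>. \<forall>T::nat. \<forall>N. \<exists>m\<ge>N. real T < \<omega> (m, 0)"
  proof (subst AE_all_countable, intro allI)
    fix T :: nat
    show "AE \<omega> in clock_space \<mu>. \<forall>N. \<exists>m\<ge>N. real T < \<omega> (m, 0)"
      using AE_inf_often[OF assms(2), of "\<lambda>m. (m, 0)" "real T"] by (simp add: inj_def)
  qed
  show ?thesis using A1 A2 A3
  proof eventually_elim
    case (elim \<omega>)
    have fin: "\<forall>b (T::real). \<exists>k. T < ring_time \<omega> b k"
      using rt_unbounded[OF elim(1)] elim(2) by blast
    have unr: "\<forall>N. \<exists>m\<ge>N. \<forall>k. \<tau> < ring_time \<omega> m k" for \<tau>
    proof
      fix N
      obtain m where m: "m \<ge> N" "real (nat \<lceil>\<tau>\<rceil>) < \<omega> (m, 0)" using elim(3) by blast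
      have "\<tau> \<le> real (nat \<lceil>\<tau>\<rceil>)" by linarith
      then have "\<forall>k. \<tau> < ring_time \<omega> m k" using m(2) rt_ge0[OF elim(1), of m] by (meson le_less_trans less_le_trans)
      then show "\<exists>m\<ge>N. \<forall>k. \<tau> < ring_time \<omega> m k" using m(1) by blast
    qed
    show ?case using det[OF elim(1) fin unr assms(1)] by blast
  qed
qed


end
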